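(* Consider the algorithm described in the context, and suppose it does not terminate finitely. Then there exists a subsequence of iterations $\mathcal K\subseteq\mathbb{N}$ such that $\lim_{k\in\mathcal K}J_k^Tc_k=0$.
   Context: Problem: $\min_{x\in\mathbb{R}^n} f(x)+r(x)$ subject to $c(x)=0$, where $f:\mathbb{R}^n\to\mathbb{R}$ and $c:\mathbb{R}^n\to\mathbb{R}^m$ ($m\le n$) are continuously differentiable and $r:\mathbb{R}^n\to\mathbb{R}_{\ge 0}$ is convex. Write $g(x)=\nabla f(x)$, $J(x)=\nabla c(x)^T$, and $f_k=f(x_k)$, $g_k=g(x_k)$, $c_k=c(x_k)$, $J_k=J(x_k)$, $r_k=r(x_k)$. All norms are Euclidean. Merit function: $\Phi_\tau(x)=\tau(f(x)+r(x))+\|c(x)\|_2$. Algorithm: inputs $x_0$, $\alpha_0>0$, $\tau_{-1}>0$; constants $\kappa_v>0$, $\sigma_c,\epsilon_\tau,\xi,\eta\in(0,1)$, $\sigma_u\in(0,1/2]$, $\bar\sigma_u:=\sigma_u+\tfrac12$. For $k=0,1,\dots$: 1. If $J_k^Tc_k\ne0$, compute $v_k$ with $v_k\in\mathrm{Range}(J_k^T)$, $\|v_k\|_2\le\kappa_v\alpha_k\|J_k^Tc_k\|_2$, $\|c_k+J_kv_k\|_2\le\|c_k+J_kv_k^c\|_2$, where $v_k^c=-\beta_k^cJ_k^Tc_k$ with $\beta_k^c$ minimizing $\tfrac12\|c_k-\beta J_kJ_k^Tc_k\|_2^2$ over $0\le\beta\le\kappa_v\alpha_k$. Otherwise set $v_k=0$,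 and if $c_k\ne0$ terminate. 2. Let $u_k$ be the unique minimizer of $g_k^Tu+\tfrac1{2\alpha_k}\|u\|_2^2+r(x_k+v_k+u)$ subject to $J_ku=0$; set $s_k=v_k+u_k$. If $s_k=0$, terminate. 3. Let $D_k:=g_k^Ts_k+\bar\sigma_u\|s_k\|_2^2/\alpha_k+r(x_k+s_k)-r_k$; $\tau_{k,\mathrm{trial}}=\infty$ if $D_k\le0$, else $\tau_{k,\mathrm{trial}}=(1-\sigma_c)(\|c_k\|_2-\|c_k+J_kv_k\|_2)/D_k$. Set $\tau_k=\tau_{k-1}$ if $\tau_{k-1}\le\tau_{k,\mathrm{trial}}$, else $\tau_k=\min\{(1-\epsilon_\tau)\tau_{k-1},\tau_{k,\mathrm{trial}}\}$. 4. With $\Delta q_k(s,\tau):=-\tau(g_k^Ts+\tfrac1{2\alpha_k}\|s\|_2^2+r(x_k+s)-r_k)+\|c_k\|_2-\|c_k+J_ks\|_2$: if $\Phi_{\tau_k}(x_k+s_k)\le\Phi_{\tau_k}(x_k)-\eta\Delta q_k(s_k,\tau_k)$ set $x_{k+1}=x_k+s_k$, $\alpha_{k+1}=\alpha_k$; else $x_{k+1}=x_k$, $\alpha_{k+1}=\xi\alpha_k$. Assumption: there is an open convex set $\mathcal X$ containing all iterates $x_k$ and trial points $x_k+s_k$ such that $f$ is bounded below on $\mathcal X$, $\nabla f$ is bounded and Lipschitz continuous on $\mathcal X$, $c$ is bounded on $\mathcal X$, $J$ is bounded and Lipschitz continuous on $\mathcal X$, and all subgradients of $r$ at points of $\mathcal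 X$ are uniformly bounded in norm. *)

theory Defs
  imports "HOL-Analysis.Analysis"
begin

definition merit :: "real \<Rightarrow> ('a \<Rightarrow> real) \<Rightarrow> ('a \<Rightarrow> real) \<Rightarrow> ('a \<Rightarrow> 'b::real_normed_vector) \<Rightarrow> 'a \<Rightarrow> real"
  where "merit tau f r c x = tau * (f x + r x) + norm (c x)"

definition model_red ::
  "(real^'n \<Rightarrow> real) \<Rightarrow> (real^'n \<Rightarrow> real^'n) \<Rightarrow> (real^'n \<Rightarrow> real) \<Rightarrow> (real^'n \<Rightarrow> real^'m)
   \<Rightarrow> (real^'n \<Rightarrow> real^'n^'m) \<Rightarrow> real^'n \<Rightarrow> real \<Rightarrow> real^'n \<Rightarrow> real \<Rightarrow> real"
  where "model_red f g r c J xk alpha s tau =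
    - tau * (g xk \<bullet> s + (1 / (2 * alpha)) * (norm s)^2 + r (xk + s) - r xk)
    + norm (c xk) - norm (c xk + J xk *v s)"

definition is_subgrad :: "(real^'n \<Rightarrow> real) \<Rightarrow> real^'n \<Rightarrow> real^'n \<Rightarrow> bool"
  where "is_subgrad r x d \<longleftrightarrow> (\<forall>y. r y \<ge> r x + d \<bullet> (y - x))"

end

theory Submission
  imports Defs
begin


lemma mv_bound: "norm ((A::real^'n^'m) *v x) \<le> norm A * norm x"
proof -
  have "(norm (A *v x))\<^sup>2 = (\<Sum>i\<in>UNIV. ((A *v x) $ i)\<^sup>2)"
    by (simp add: norm_vec_def L2_set_def sum_nonneg)
  also have "\<dots> \<le> (\<Sum>i\<in>UNIV. (norm (A $ i))\<^sup>2 * (norm x)\<^sup>2)"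
  proof (rule sum_mono)
    fix i
    have "\<bar>(A *v x) $ i\<bar> \<le> norm (A $ i) * norm x"
      by (simp add: matrix_vector_mul_component Cauchy_Schwarz_ineq2)
    then have "\<bar>(A *v x) $ i\<bar>\<^sup>2 \<le> (norm (A $ i) * norm x)\<^sup>2"
      by (rule power_mono) simp
    then show "((A *v x) $ i)\<^sup>2 \<le> (norm (A $ i))\<^sup>2 * (norm x)\<^sup>2"
      by (simp add: power_mult_distrib)
  qed
  also have "\<dots> = (\<Sum>i\<in>UNIV. (norm (A $ i))\<^sup>2) * (norm x)\<^sup>2"
    by (simp add: sum_distrib_right)
  also have "(\<Sum>i\<in>UNIV. (norm (A $ i))\<^sup>2) = (norm A)\<^sup>2"
    by (simp add: norm_vec_def L2_set_def sum_nonneg)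
  also have "(norm A)\<^sup>2 * (norm x)\<^sup>2 = (norm A * norm x)\<^sup>2"
    by (simp add: power_mult_distrib)
  finally show ?thesis
    by (rule power2_le_imp_le) simp
qed

lemma JTc_sq: "(norm (transpose (J::real^'n^'m) *v c))\<^sup>2 = c \<bullet> (J *v (transpose J *v c))"
proof -
  have "transpose J *v c = c v* J"
    by (metis transpose_transpose vector_transpose_matrix)
  then show ?thesis
    by (metis dot_lmul_matrix power2_norm_eq_inner)
qed

lemma JTc_bound: "norm (transpose (J::real^'n^'m) *v c) \<le> norm J * norm c"
proof -
  let ?w = "transpose J *v c"
  have "(norm ?w)\<^sup>2 \<le> norm c * norm (J *v ?w)"
    using JTc_sq[of J c] Cauchy_Schwarz_ineq2[of c "J *v ?w"] by (simp add: abs_le_iff)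
  also have "\<dots> \<le> norm c * (norm J * norm ?w)"
    by (simp add: mult_left_mono mv_bound)
  finally have "norm ?w * norm ?w \<le> (norm J * norm c) * norm ?w"
    by (simp add: power2_eq_square algebra_simps)
  then show ?thesis
    by (cases "norm ?w = 0") (auto simp: mult_le_cancel_right)
qed


lemma subgrad_exists:
  fixes r :: "'a::euclidean_space \<Rightarrow> real"
  assumes cv: "convex_on UNIV r"
  shows "\<exists>d. \<forall>y. r y \<ge> r x + d \<bullet> (y - x)"
proof -
  define S where "S = {(w, s). r (x + w) - r x < s}"
  have convS: "convex S"
    unfolding convex_def
  proof (intro ballI allI impI)
    fix z1 z2 :: "'a \<times> real" and u v :: real
    assume z: "z1 \<in> S" "z2 \<in> S" and uv0: "0 \<le> u" "0 \<le> v" "u + v = 1"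
    then have uv: "0 \<le> u \<and> 0 \<le> v \<and> u + v = 1" by simp
    obtain w1 s1 where z1: "z1 = (w1, s1)" by force
    obtain w2 s2 where z2: "z2 = (w2, s2)" by force
    have h1: "r (x + w1) - r x < s1" and h2: "r (x + w2) - r x < s2"
      using z z1 z2 by (auto simp: S_def)
    have "x + (u *\<^sub>R w1 + v *\<^sub>R w2) = u *\<^sub>R (x + w1) + v *\<^sub>R (x + w2)"
      using uv by (simp add: algebra_simps flip: scaleR_add_left)
    then have "r (x + (u *\<^sub>R w1 + v *\<^sub>R w2)) \<le> u * r (x + w1) + v * r (x + w2)"
      using cv uv by (simp add: convex_on_def)
    moreover have "u * (r (x + w1) - r x) + v * (r (x + w2) - r x) < u * s1 + v * s2"
    proof (cases "u = 0")
      case True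
      then show ?thesis using uv h2 by simp
    next
      case False
      then have "u * (r (x + w1) - r x) < u * s1" using uv h1 by simp
      moreover have "v * (r (x + w2) - r x) \<le> v * s2" using uv h2 by (simp add: mult_left_mono)
      ultimately show ?thesis by simp
    qed
    moreover have "u * r x + v * r x = r x" using uv by (metis distrib_right mult_1)
    ultimately have "r (x + (u *\<^sub>R w1 + v *\<^sub>R w2)) - r x < u * s1 + v * s2"
      by (simp add: algebra_simps)
    then show "u *\<^sub>R z1 + v *\<^sub>R z2 \<in> S"
      by (simp add: z1 z2 S_def)
  qed
  have "0 \<notin> S" by (simp add: S_def zero_prod_def)
  then obtain a where a: "a \<noteq> 0" "\<forall>z\<in>S. 0 \<le> a \<bullet> z"
    using separating_hyperplane_set_0[OF convS] by blast
  obtain p q where pq: "a = (p, q)" by force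
  have key: "\<And>w s. r (x + w) - r x < s \<Longrightarrow> 0 \<le> p \<bullet> w + q * s"
    using a(2) pq by (auto simp: S_def)
  have q0: "0 \<le> q" using key[of 0 1] by simp
  have "q \<noteq> 0"
  proof
    assume "q = 0"
    then have "0 \<le> p \<bullet> (- p)" using key[of "- p" "r (x - p) - r x + 1"] by simp
    then have "p \<bullet> p = 0" using inner_ge_zero[of p] by simp
    then have "p = 0" by simp
    with \<open>q = 0\<close> pq a(1) show False by (simp add: zero_prod_def)
  qed
  with q0 have qpos: "q > 0" by simp
  define d where "d = (- 1 / q) *\<^sub>R p"
  have "r y \<ge> r x + d \<bullet> (y - x)" for y
  proof (rule ccontr)
    assume "\<not> ?thesis"
    then have lt: "r y - r x < d \<bullet> (y - x)" by simp
    define e where "e = (d \<bullet> (y - x) - (r y - r x)) / 2"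
    have "r (x + (y - x)) - r x < r y - r x + e" using lt by (simp add: e_def)
    then have "0 \<le> p \<bullet> (y - x) + q * (r y - r x + e)" by (rule key)
    moreover have "p \<bullet> (y - x) = - q * (d \<bullet> (y - x))"
      using qpos by (simp add: d_def)
    moreover have "r y - r x + e < d \<bullet> (y - x)" using lt by (simp add: e_def field_simps)
    moreover have "q * (r y - r x + e) < q * (d \<bullet> (y - x))"
      using calculation(3) qpos by (rule mult_strict_left_mono)
    ultimately show False by linarith
  qed
  then show ?thesis by blast
qed

lemma r_lip:
  fixes r :: "real^'n \<Rightarrow> real"
  assumes cv: "convex_on UNIV r" and B: "\<forall>y\<in>X. \<forall>d. is_subgrad r y d \<longrightarrow> norm d \<le> B"
    and y: "y \<in> X"
  shows "r y - r z \<le> B * norm (y - z)"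
proof -
  obtain d where d: "\<forall>z. r z \<ge> r y + d \<bullet> (z - y)" using subgrad_exists[OF cv] by blast
  then have "norm d \<le> B" using B y by (simp add: is_subgrad_def)
  have "r z \<ge> r y + d \<bullet> (z - y)" using d by blast
  then have "r y - r z \<le> - (d \<bullet> (z - y))" by linarith
  also have "\<dots> \<le> norm d * norm (z - y)"
    using Cauchy_Schwarz_ineq2[of d "z - y"] by (simp add: abs_le_iff)
  also have "\<dots> \<le> B * norm (y - z)"
    using \<open>norm d \<le> B\<close> by (simp add: norm_minus_commute mult_right_mono)
  finally show ?thesis .
qed


lemma f_taylor:
  fixes f :: "real^'n \<Rightarrow> real" and g :: "real^'n \<Rightarrow> real^'n"
  assumes fd: "\<And>y. (f has_derivative (\<lambda>h. g y \<bullet> h)) (at y)"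
    and X: "convex X" "y \<in> X" "y + s \<in> X"
    and L: "\<forall>a\<in>X. \<forall>b\<in>X. norm (g a - g b) \<le> L * norm (a - b)" and L0: "0 \<le> L"
  shows "f (y + s) - f y \<le> g y \<bullet> s + L * (norm s)\<^sup>2"
proof -
  let ?S = "closed_segment y (y + s)"
  have sub: "?S \<subseteq> X" using X by (simp add: convex_contains_segment)
  define h where "h z = f z - g y \<bullet> z" for z
  have hd: "(h has_derivative (\<lambda>k. g z \<bullet> k - g y \<bullet> k)) (at z within ?S)" for z
    unfolding h_def
    by (intro has_derivative_diff has_derivative_at_withinI[OF fd]
        bounded_linear.has_derivative[OF bounded_linear_inner_right has_derivative_ident])
  have ob: "onorm (\<lambda>k. g z \<bullet> k - g y \<bullet> k) \<le> L * norm s" if z: "z \<in> ?S" for z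
  proof (rule onorm_le)
    fix k
    have "norm (g z \<bullet> k - g y \<bullet> k) = \<bar>(g z - g y) \<bullet> k\<bar>" by (simp add: inner_diff_left)
    also have "\<dots> \<le> norm (g z - g y) * norm k" by (rule Cauchy_Schwarz_ineq2)
    also have "\<dots> \<le> L * norm (z - y) * norm k"
      using L sub z X(2) by (intro mult_right_mono) auto
    also have "\<dots> \<le> L * norm s * norm k"
      using segment_bound(1)[OF z] L0 by (intro mult_right_mono mult_left_mono) auto
    finally show "norm (g z \<bullet> k - g y \<bullet> k) \<le> L * norm s * norm k" .
  qed
  have "norm (h (y + s) - h y) \<le> L * norm s * norm (y + s - y)"
    by (rule differentiable_bound[OF convex_closed_segment hd ob]) auto
  then have "h (y + s) - h y \<le> L * norm s * norm s" by simp
  then show ?thesis by (simp add: h_def inner_add_right power2_eq_square algebra_simps)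
qed

lemma c_taylor:
  fixes c :: "real^'n \<Rightarrow> real^'m" and J :: "real^'n \<Rightarrow> real^'n^'m"
  assumes cd: "\<And>y. (c has_derivative (\<lambda>h. J y *v h)) (at y)"
    and X: "convex X" "y \<in> X" "y + s \<in> X"
    and L: "\<forall>a\<in>X. \<forall>b\<in>X. norm (J a - J b) \<le> L * norm (a - b)" and L0: "0 \<le> L"
  shows "norm (c (y + s) - c y - J y *v s) \<le> L * (norm s)\<^sup>2"
proof -
  let ?S = "closed_segment y (y + s)"
  have sub: "?S \<subseteq> X" using X by (simp add: convex_contains_segment)
  define h where "h z = c z - J y *v z" for z
  have hd: "(h has_derivative (\<lambda>k. J z *v k - J y *v k)) (at z within ?S)" for z
    unfolding h_def
    by (intro has_derivative_diff has_derivative_at_withinI[OF cd]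
        bounded_linear.has_derivative[OF matrix_vector_mul_bounded_linear has_derivative_ident])
  have ob: "onorm (\<lambda>k. J z *v k - J y *v k) \<le> L * norm s" if z: "z \<in> ?S" for z
  proof (rule onorm_le)
    fix k
    have "norm (J z *v k - J y *v k) = norm ((J z - J y) *v k)" by (simp add: matrix_vector_mult_diff_rdistrib)
    also have "\<dots> \<le> norm (J z - J y) * norm k" by (rule mv_bound)
    also have "\<dots> \<le> L * norm (z - y) * norm k"
      using L sub z X(2) by (intro mult_right_mono) auto
    also have "\<dots> \<le> L * norm s * norm k"
      using segment_bound(1)[OF z] L0 by (intro mult_right_mono mult_left_mono) auto
    finally show "norm (J z *v k - J y *v k) \<le> L * norm s * norm k" .
  qed
  have "norm (h (y + s) - h y) \<le> L * norm s * norm (y + s - y)"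
    by (rule differentiable_bound[OF convex_closed_segment hd ob]) auto
  moreover have "h (y + s) - h y = c (y + s) - c y - J y *v s"
    by (simp add: h_def matrix_vector_right_distrib)
  ultimately show ?thesis by (simp add: power2_eq_square)
qed


lemma u_bound:
  fixes G u p :: "real^'n" and Jm :: "real^'n^'m" and r :: "real^'n \<Rightarrow> real"
  assumes Ju: "Jm *v u = 0"
    and opt: "\<forall>w. Jm *v w = 0 \<longrightarrow> G \<bullet> u + (1 / (2 * a)) * (norm u)\<^sup>2 + r (p + u)
                 \<le> G \<bullet> w + (1 / (2 * a)) * (norm w)\<^sup>2 + r (p + w)"
    and a: "a > 0" and X: "open X" "p + u \<in> X"
    and G: "norm G \<le> Bg" and Br0: "0 \<le> Br"
    and rl: "\<And>y z. y \<in> X \<Longrightarrow> r y - r z \<le> Br * norm (y - z)"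
  shows "norm u \<le> 2 * a * (Br + Bg)"
proof (cases "u = 0")
  case True
  have "0 \<le> Bg" using G norm_ge_zero order_trans by blast
  then show ?thesis using True a Br0 by simp
next
  case False
  define n where "n = norm u"
  have n0: "n > 0" using False by (simp add: n_def)
  obtain e where e: "e > 0" "ball (p + u) e \<subseteq> X" using X open_contains_ball by blast
  define t where "t = min 1 (e / (2 * n))"
  have t0: "0 < t" "t \<le> 1" using e n0 by (auto simp: t_def)
  have "t * n \<le> e / (2 * n) * n" using n0 by (intro mult_right_mono) (auto simp: t_def)
  also have "\<dots> < e" using n0 e by (simp add: field_simps)
  finally have tn: "t * n < e" .
  have yX: "p + (1 - t) *\<^sub>R u \<in> X"
  proof -
    have "dist (p + u) (p + (1 - t) *\<^sub>R u) = t * n"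
      using t0 by (simp add: dist_norm n_def algebra_simps)
    then show ?thesis using e tn by (auto simp: subset_iff)
  qed
  let ?q = "1 / (2 * a)"
  have A: "G \<bullet> u + ?q * n\<^sup>2 + r (p + u) \<le> (1 - t) * (G \<bullet> u) + ?q * ((1 - t) * n)\<^sup>2 + r (p + (1 - t) *\<^sub>R u)"
  proof -
    have "Jm *v ((1 - t) *\<^sub>R u) = 0" by (simp add: matrix_vector_mult_scaleR Ju)
    then have "G \<bullet> u + ?q * (norm u)\<^sup>2 + r (p + u) \<le> G \<bullet> ((1 - t) *\<^sub>R u) + ?q * (norm ((1 - t) *\<^sub>R u))\<^sup>2 + r (p + (1 - t) *\<^sub>R u)"
      using opt by blast
    moreover have "norm ((1 - t) *\<^sub>R u) = (1 - t) * n" using t0 by (simp add: n_def)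
    ultimately show ?thesis by (simp only: n_def inner_scaleR_right)
  qed
  have B: "r (p + (1 - t) *\<^sub>R u) - r (p + u) \<le> Br * (t * n)"
  proof -
    have "r (p + (1 - t) *\<^sub>R u) - r (p + u) \<le> Br * norm (p + (1 - t) *\<^sub>R u - (p + u))"
      by (rule rl[OF yX])
    moreover have "norm (p + (1 - t) *\<^sub>R u - (p + u)) = t * n"
      using t0 by (simp add: n_def algebra_simps)
    ultimately show ?thesis by simp
  qed
  have C: "- (G \<bullet> u) \<le> Bg * n"
  proof -
    have "\<bar>G \<bullet> u\<bar> \<le> norm G * n" by (simp add: n_def Cauchy_Schwarz_ineq2)
    also have "\<dots> \<le> Bg * n" using G n0 by (simp add: mult_right_mono)
    finally show ?thesis by simp
  qed
  have D: "t * (G \<bullet> u) + ?q * n\<^sup>2 * (t * (2 - t)) \<le> Br * (t * n)"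
  proof -
    have "?q * ((1 - t) * n)\<^sup>2 = ?q * n\<^sup>2 - ?q * n\<^sup>2 * (t * (2 - t))"
      using a by (simp add: power2_eq_square field_simps)
    then show ?thesis using A B by (simp add: algebra_simps)
  qed
  have E: "?q * n\<^sup>2 * t \<le> ?q * n\<^sup>2 * (t * (2 - t))"
    using t0 a by (intro mult_left_mono) (auto simp: algebra_simps)
  have "t * (?q * n\<^sup>2) \<le> t * ((Br + Bg) * n)"
  proof -
    have "t * (- (G \<bullet> u)) \<le> t * (Bg * n)" using C t0 by (intro mult_left_mono) auto
    then show ?thesis using D E by (simp add: algebra_simps)
  qed
  then have "?q * n\<^sup>2 \<le> (Br + Bg) * n" by (simp only: mult_le_cancel_left_pos[OF t0(1)])
  then have "n * (?q * n) \<le> n * (Br + Bg)" by (simp add: power2_eq_square algebra_simps)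
  then have "?q * n \<le> Br + Bg" by (simp only: mult_le_cancel_left_pos[OF n0])
  then have "n / (2 * a) \<le> Br + Bg" by simp
  then show ?thesis using a by (simp add: n_def pos_divide_le_eq mult.commute)
qed

lemma normal_dec:
  fixes Jm :: "real^'n^'m" and c :: "real^'m" and v :: "real^'n"
  assumes bmin: "(1/2) * (norm (c - beta *\<^sub>R (Jm *v (transpose Jm *v c))))\<^sup>2
                  \<le> (1/2) * (norm (c - b *\<^sub>R (Jm *v (transpose Jm *v c))))\<^sup>2"
    and vb: "norm (c + Jm *v v) \<le> norm (c + Jm *v (- beta *\<^sub>R (transpose Jm *v c)))"
    and b: "0 \<le> b" "b * (norm Jm)\<^sup>2 \<le> 1"
  shows "(norm (c + Jm *v v))\<^sup>2 \<le> (norm c)\<^sup>2 - b * (norm (transpose Jm *v c))\<^sup>2"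
proof -
  define w where "w = transpose Jm *v c"
  define z where "z = Jm *v w"
  have neg: "Jm *v (- x) = - (Jm *v x)" for x
    by (metis matrix_vector_mult_diff_distrib diff_0 matrix_vector_mult_0_right)
  have eq: "c + Jm *v (- beta *\<^sub>R w) = c - beta *\<^sub>R z"
    by (simp add: z_def matrix_vector_mult_scaleR neg)
  have "(norm (c + Jm *v v))\<^sup>2 \<le> (norm (c - beta *\<^sub>R z))\<^sup>2"
    using vb eq by (simp add: w_def power_mono)
  also have "\<dots> \<le> (norm (c - b *\<^sub>R z))\<^sup>2" using bmin by (simp add: z_def w_def)
  also have "\<dots> = (norm c)\<^sup>2 - 2 * b * (c \<bullet> z) + b\<^sup>2 * (norm z)\<^sup>2"
    by (simp only: power2_norm_eq_inner) (simp add: inner_diff_left inner_diff_right inner_commute power2_eq_square algebra_simps)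
  also have "c \<bullet> z = (norm w)\<^sup>2" unfolding z_def w_def by (rule JTc_sq[symmetric])
  also have "b\<^sup>2 * (norm z)\<^sup>2 \<le> b * (norm w)\<^sup>2"
  proof -
    have "norm z \<le> norm Jm * norm w" by (simp add: z_def mv_bound)
    then have "(norm z)\<^sup>2 \<le> (norm Jm)\<^sup>2 * (norm w)\<^sup>2"
      by (metis norm_ge_zero power_mono power_mult_distrib)
    then have "b\<^sup>2 * (norm z)\<^sup>2 \<le> b\<^sup>2 * ((norm Jm)\<^sup>2 * (norm w)\<^sup>2)"
      by (simp add: mult_left_mono)
    also have "\<dots> = b * (b * (norm Jm)\<^sup>2) * (norm w)\<^sup>2" by (simp add: power2_eq_square)
    also have "\<dots> \<le> b * 1 * (norm w)\<^sup>2"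
      using b by (intro mult_right_mono mult_left_mono) auto
    finally show ?thesis by simp
  qed
  finally show ?thesis by (simp add: w_def)
qed

lemma N_bound:
  fixes y c :: "'a::real_normed_vector"
  assumes "(norm y)\<^sup>2 \<le> (norm c)\<^sup>2 - D" "0 \<le> D" "norm c \<le> Bc" "0 < Bc"
  shows "D / (2 * Bc) \<le> norm c - norm y"
proof -
  have "(norm y)\<^sup>2 \<le> (norm c)\<^sup>2" using assms by linarith
  then have yc: "norm y \<le> norm c" using power2_le_imp_le[of "norm y" "norm c"] by simp
  have "D \<le> (norm c - norm y) * (norm c + norm y)"
    using assms(1) by (simp add: power2_eq_square algebra_simps)
  also have "\<dots> \<le> (norm c - norm y) * (2 * Bc)"
    using yc assms by (intro mult_left_mono) auto
  finally show ?thesis using assms by (simp add: pos_divide_le_eq)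
qed

primrec pick :: "(nat \<Rightarrow> 'b::real_normed_vector) \<Rightarrow> nat \<Rightarrow> nat" where
  "pick a 0 = (SOME k. norm (a k) < 1)"
| "pick a (Suc i) = (SOME k. k > pick a i \<and> norm (a k) < inverse (real (Suc (Suc i))))"

lemma subseq_zero:
  fixes a :: "nat \<Rightarrow> 'b::real_normed_vector"
  assumes "\<not> (\<exists>e>0. \<exists>N. \<forall>k\<ge>N. e \<le> norm (a k))"
  shows "\<exists>K :: nat \<Rightarrow> nat. strict_mono K \<and> (\<lambda>i. a (K i)) \<longlonglongrightarrow> 0"
proof -
  have fr: "\<And>e N. e > 0 \<Longrightarrow> \<exists>k>N. norm (a k) < e"
  proof -
    fix e :: real and N assume "e > 0"
    then have "\<not> (\<forall>k\<ge>Suc N. e \<le> norm (a k))" using assms by blast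
    then show "\<exists>k>N. norm (a k) < e" by (auto simp: not_le Suc_le_eq)
  qed
  have P: "norm (a (pick a i)) < inverse (real (Suc i)) \<and> pick a i < pick a (Suc i)" for i
  proof -
    have 1: "norm (a (pick a i)) < inverse (real (Suc i))"
    proof (cases i)
      case 0
      have "\<exists>k. norm (a k) < 1" using fr[of 1 0] by auto
      then show ?thesis using 0 by simp (rule someI_ex)
    next
      case (Suc j)
      have "\<exists>k. k > pick a j \<and> norm (a k) < inverse (real (Suc (Suc j)))"
        using fr[of "inverse (real (Suc (Suc j)))" "pick a j"] by auto
      from someI_ex[OF this] show ?thesis using Suc by simp
    qed
    have "\<exists>k. k > pick a i \<and> norm (a k) < inverse (real (Suc (Suc i)))"
      using fr[of "inverse (real (Suc (Suc i)))" "pick a i"] by auto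
    from someI_ex[OF this] have "pick a i < pick a (Suc i)" by simp
    with 1 show ?thesis by blast
  qed
  have sm: "strict_mono (pick a)" using P by (simp add: strict_mono_Suc_iff)
  have "(\<lambda>i. a (pick a i)) \<longlonglongrightarrow> 0"
  proof (rule Lim_null_comparison)
    show "\<forall>\<^sub>F i in sequentially. norm (a (pick a i)) \<le> inverse (real (Suc i))"
      using P by (simp add: less_imp_le)
    show "(\<lambda>i. inverse (real (Suc i))) \<longlonglongrightarrow> 0" by (rule LIMSEQ_inverse_real_of_nat)
  qed
  with sm show ?thesis by blast
qed


lemma le_max_mult: "(a::real) \<le> L0 * n \<Longrightarrow> 0 \<le> n \<Longrightarrow> a \<le> max L0 1 * n"
  by (metis max.cobounded1 mult_right_mono order_trans)

lemma if_split_fact: "(if P then A else B) \<Longrightarrow> (P \<longrightarrow> A) \<and> (\<not> P \<longrightarrow> B)"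
  by auto


theorem theorem3p10:
  fixes f :: "real^'n \<Rightarrow> real" and g :: "real^'n \<Rightarrow> real^'n"
    and c :: "real^'n \<Rightarrow> real^'m" and J :: "real^'n \<Rightarrow> real^'n^'m"
    and r :: "real^'n \<Rightarrow> real"
    and X :: "(real^'n) set"
    and x v u :: "nat \<Rightarrow> real^'n"
    and alpha tau beta :: "nat \<Rightarrow> real"
    and tau_m1 kappa_v sigma_c eps_tau xi eta sigma_u :: real
  assumes dims: "CARD('m) \<le> CARD('n)"
    and f_deriv: "\<And>y. (f has_derivative (\<lambda>h. g y \<bullet> h)) (at y)"
    and g_cont: "continuous_on UNIV g"
    and c_deriv: "\<And>y. (c has_derivative (\<lambda>h. J y *v h)) (at y)"
    and J_cont: "continuous_on UNIV J"
    and r_nonneg: "\<And>y. r y \<ge> 0"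
    and r_convex: "convex_on UNIV r"
    and params: "kappa_v > 0" "0 < sigma_c" "sigma_c < 1" "0 < eps_tau" "eps_tau < 1"
      "0 < xi" "xi < 1" "0 < eta" "eta < 1" "0 < sigma_u" "sigma_u \<le> 1/2"
    and init: "alpha 0 > 0" "tau_m1 > 0"
    \<comment> \<open>Step 1 (the algorithm does not terminate in step 1)\<close>
    and no_term1: "\<And>k. transpose (J (x k)) *v c (x k) = 0 \<Longrightarrow> c (x k) = 0"
    and step1_zero: "\<And>k. transpose (J (x k)) *v c (x k) = 0 \<Longrightarrow> v k = 0"
    and step1_beta: "\<And>k. transpose (J (x k)) *v c (x k) \<noteq> 0 \<Longrightarrow>
        0 \<le> beta k \<and> beta k \<le> kappa_v * alpha k \<and>
        (\<forall>b. 0 \<le> b \<and> b \<le> kappa_v * alpha k \<longrightarrow>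
           (1/2) * (norm (c (x k) - beta k *\<^sub>R (J (x k) *v (transpose (J (x k)) *v c (x k)))))^2
           \<le> (1/2) * (norm (c (x k) - b *\<^sub>R (J (x k) *v (transpose (J (x k)) *v c (x k)))))^2)"
    and step1_v: "\<And>k. transpose (J (x k)) *v c (x k) \<noteq> 0 \<Longrightarrow>
        (\<exists>w. v k = transpose (J (x k)) *v w) \<and>
        norm (v k) \<le> kappa_v * alpha k * norm (transpose (J (x k)) *v c (x k)) \<and>
        norm (c (x k) + J (x k) *v v k)
          \<le> norm (c (x k) + J (x k) *v (- beta k *\<^sub>R (transpose (J (x k)) *v c (x k))))"
    \<comment> \<open>Step 2 (u k is the minimizer of the tangential subproblem; no termination)\<close>
    and step2: "\<And>k. J (x k) *v u k = 0 \<and>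
        (\<forall>w. J (x k) *v w = 0 \<longrightarrow>
           g (x k) \<bullet> u k + (1 / (2 * alpha k)) * (norm (u k))^2 + r (x k + v k + u k)
           \<le> g (x k) \<bullet> w + (1 / (2 * alpha k)) * (norm w)^2 + r (x k + v k + w))"
    and no_term2: "\<And>k. v k + u k \<noteq> 0"
    \<comment> \<open>Step 3 (merit parameter update; tau_trial = infinity when D_k \<le> 0)\<close>
    and step3: "\<And>k. let s = v k + u k;
        D = g (x k) \<bullet> s + (sigma_u + 1/2) * (norm s)^2 / alpha k + r (x k + s) - r (x k);
        tprev = (if k = 0 then tau_m1 else tau (k - 1));
        ttrial = (1 - sigma_c) * (norm (c (x k)) - norm (c (x k) + J (x k) *v v k)) / D
      in tau k = (if D \<le> 0 then tprev
                  else if tprev \<le> ttrial then tprev else min ((1 - eps_tau) * tprev) ttrial)"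
    \<comment> \<open>Step 4 (acceptance test and step size update)\<close>
    and step4: "\<And>k. let s = v k + u k in
      (if merit (tau k) f r c (x k + s)
            \<le> merit (tau k) f r c (x k) - eta * model_red f g r c J (x k) (alpha k) s (tau k)
       then x (Suc k) = x k + s \<and> alpha (Suc k) = alpha k
       else x (Suc k) = x k \<and> alpha (Suc k) = xi * alpha k)"
    \<comment> \<open>Standing assumption on the open convex set X\<close>
    and X: "open X" "convex X" "\<And>k. x k \<in> X" "\<And>k. x k + (v k + u k) \<in> X"
    and f_bdd_below: "\<exists>B. \<forall>y\<in>X. B \<le> f y"
    and g_bdd: "\<exists>B. \<forall>y\<in>X. norm (g y) \<le> B"
    and g_lip: "\<exists>L. \<forall>y\<in>X. \<forall>z\<in>X. norm (g y - g z) \<le> L * norm (y - z)"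
    and c_bdd: "\<exists>B. \<forall>y\<in>X. norm (c y) \<le> B"
    and J_bdd: "\<exists>B. \<forall>y\<in>X. norm (J y) \<le> B"
    and J_lip: "\<exists>L. \<forall>y\<in>X. \<forall>z\<in>X. norm (J y - J z) \<le> L * norm (y - z)"
    and r_subgrad_bdd: "\<exists>B. \<forall>y\<in>X. \<forall>d. is_subgrad r y d \<longrightarrow> norm d \<le> B"
  shows "\<exists>K :: nat \<Rightarrow> nat. strict_mono K \<and>
           (\<lambda>i. transpose (J (x (K i))) *v c (x (K i))) \<longlonglongrightarrow> 0"
proof (rule ccontr)
  assume nc: "\<not> ?thesis"
  have "\<exists>e>0. \<exists>N. \<forall>k\<ge>N. e \<le> norm (transpose (J (x k)) *v c (x k))"
    using subseq_zero[of "\<lambda>k. transpose (J (x k)) *v c (x k)"] nc by blast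
  then obtain eps k0 where eps: "eps > 0" and k0: "\<And>k. k \<ge> k0 \<Longrightarrow> eps \<le> norm (transpose (J (x k)) *v c (x k))"
    by blast
  obtain flow where flow: "\<And>y. y \<in> X \<Longrightarrow> flow \<le> f y" using f_bdd_below by blast
  obtain Bg0 where Bg0: "\<forall>y\<in>X. norm (g y) \<le> Bg0" using g_bdd by blast
  obtain Lg0 where Lg0: "\<forall>y\<in>X. \<forall>z\<in>X. norm (g y - g z) \<le> Lg0 * norm (y - z)" using g_lip by blast
  obtain Bc0 where Bc0: "\<forall>y\<in>X. norm (c y) \<le> Bc0" using c_bdd by blast
  obtain BJ0 where BJ0: "\<forall>y\<in>X. norm (J y) \<le> BJ0" using J_bdd by blast
  obtain LJ0 where LJ0: "\<forall>y\<in>X. \<forall>z\<in>X. norm (J y - J z) \<le> LJ0 * norm (y - z)" using J_lip by blast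
  obtain Br0 where Br0: "\<forall>y\<in>X. \<forall>d. is_subgrad r y d \<longrightarrow> norm d \<le> Br0" using r_subgrad_bdd by blast
  define Bg where "Bg = max Bg0 1"
  define Lg where "Lg = max Lg0 1"
  define Bc where "Bc = max Bc0 1"
  define BJ where "BJ = max BJ0 1"
  define LJ where "LJ = max LJ0 1"
  define Br where "Br = max Br0 1"
  have Bg: "\<And>y. y \<in> X \<Longrightarrow> norm (g y) \<le> Bg" using Bg0 by (force simp: Bg_def)
  have Bc: "\<And>y. y \<in> X \<Longrightarrow> norm (c y) \<le> Bc" using Bc0 by (force simp: Bc_def)
  have BJ: "\<And>y. y \<in> X \<Longrightarrow> norm (J y) \<le> BJ" using BJ0 by (force simp: BJ_def)
  have Lg: "\<forall>y\<in>X. \<forall>z\<in>X. norm (g y - g z) \<le> Lg * norm (y - z)"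
    using Lg0 unfolding Lg_def by (auto intro!: le_max_mult)
  have LJ: "\<forall>y\<in>X. \<forall>z\<in>X. norm (J y - J z) \<le> LJ * norm (y - z)"
    using LJ0 unfolding LJ_def by (auto intro!: le_max_mult)
  have Br: "\<forall>y\<in>X. \<forall>d. is_subgrad r y d \<longrightarrow> norm d \<le> Br"
    using Br0 by (force simp: Br_def)
  have pos: "Bg \<ge> 1" "Lg \<ge> 1" "Bc \<ge> 1" "BJ \<ge> 1" "LJ \<ge> 1" "Br \<ge> 1"
    by (auto simp: Bg_def Lg_def Bc_def BJ_def LJ_def Br_def)
  have rl: "\<And>y z. y \<in> X \<Longrightarrow> r y - r z \<le> Br * norm (y - z)"
    using r_lip[OF r_convex Br] by blast
  note p = params
  have ju: "\<And>k. J (x k) *v u k = 0" using step2 by blast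
  have Js: "\<And>k. J (x k) *v (v k + u k) = J (x k) *v v k"
    using ju by (simp add: matrix_vector_right_distrib)
  have alpha_pos: "\<And>k. alpha k > 0"
  proof -
    fix k show "alpha k > 0"
    proof (induction k)
      case 0 then show ?case using init by simp
    next
      case (Suc k)
      have "if merit (tau k) f r c (x k + (v k + u k))
            \<le> merit (tau k) f r c (x k) - eta * model_red f g r c J (x k) (alpha k) (v k + u k) (tau k)
       then x (Suc k) = x k + (v k + u k) \<and> alpha (Suc k) = alpha k
       else x (Suc k) = x k \<and> alpha (Suc k) = xi * alpha k"
        using step4[of k] unfolding Let_def .
      then show ?case using Suc p by (auto split: if_splits)
    qed
  qed
  have Nnn: "\<And>k. norm (c (x k) + J (x k) *v v k) \<le> norm (c (x k))"
  proof -
    fix k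
    show "norm (c (x k) + J (x k) *v v k) \<le> norm (c (x k))"
    proof (cases "transpose (J (x k)) *v c (x k) = 0")
      case True then show ?thesis using step1_zero by simp
    next
      case False
      have b1: "(1/2) * (norm (c (x k) - beta k *\<^sub>R (J (x k) *v (transpose (J (x k)) *v c (x k)))))\<^sup>2
           \<le> (1/2) * (norm (c (x k) - 0 *\<^sub>R (J (x k) *v (transpose (J (x k)) *v c (x k)))))\<^sup>2"
        using step1_beta[OF False] p alpha_pos[of k] by auto
      have "(norm (c (x k) + J (x k) *v v k))\<^sup>2 \<le> (norm (c (x k)))\<^sup>2 - 0 * (norm (transpose (J (x k)) *v c (x k)))\<^sup>2"
        by (rule normal_dec[OF b1]) (use step1_v[OF False] in auto)
      then show ?thesis using power2_le_imp_le[of "norm (c (x k) + J (x k) *v v k)" "norm (c (x k))"] by simp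
    qed
  qed
  have tau_step: "\<And>k. 0 \<le> (if k = 0 then tau_m1 else tau (k - 1)) \<Longrightarrow>
      0 \<le> tau k \<and> tau k \<le> (if k = 0 then tau_m1 else tau (k - 1)) \<and>
      tau k * (g (x k) \<bullet> (v k + u k) + (sigma_u + 1/2) * (norm (v k + u k))\<^sup>2 / alpha k + r (x k + (v k + u k)) - r (x k))
        \<le> (1 - sigma_c) * (norm (c (x k)) - norm (c (x k) + J (x k) *v v k))"
  proof -
    fix k
    define D where "D = g (x k) \<bullet> (v k + u k) + (sigma_u + 1/2) * (norm (v k + u k))\<^sup>2 / alpha k + r (x k + (v k + u k)) - r (x k)"
    define tp where "tp = (if k = 0 then tau_m1 else tau (k - 1))"
    define tt where "tt = (1 - sigma_c) * (norm (c (x k)) - norm (c (x k) + J (x k) *v v k)) / D"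
    define Nk where "Nk = norm (c (x k)) - norm (c (x k) + J (x k) *v v k)"
    assume tp0: "0 \<le> (if k = 0 then tau_m1 else tau (k - 1))"
    then have tp0': "0 \<le> tp" by (simp add: tp_def)
    have Nk0: "0 \<le> Nk" using Nnn[of k] by (simp add: Nk_def)
    have tk: "tau k = (if D \<le> 0 then tp else if tp \<le> tt then tp else min ((1 - eps_tau) * tp) tt)"
      using step3[of k] unfolding Let_def D_def tp_def tt_def .
    show "0 \<le> tau k \<and> tau k \<le> (if k = 0 then tau_m1 else tau (k - 1)) \<and> tau k * D \<le> (1 - sigma_c) * Nk"
      unfolding tp_def[symmetric] D_def[symmetric] Nk_def[symmetric]
    proof (cases "D \<le> 0")
      case True
      then have "tau k = tp" using tk by simp
      moreover have "tp * D \<le> 0" using True tp0' by (simp add: mult_nonneg_nonpos)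
      moreover have "0 \<le> (1 - sigma_c) * Nk" using Nk0 p by simp
      ultimately show "0 \<le> tau k \<and> tau k \<le> tp \<and> tau k * D \<le> (1 - sigma_c) * Nk" using tp0' by simp
    next
      case False
      then have Dp: "D > 0" by simp
      have tt0: "0 \<le> tt" using Dp Nk0 p by (simp add: tt_def Nk_def[symmetric])
      have ttD: "tt * D = (1 - sigma_c) * Nk" using Dp by (simp add: tt_def Nk_def)
      have le: "tau k \<le> tt" and ge: "0 \<le> tau k" and le2: "tau k \<le> tp"
        using tk False tt0 tp0' p by (auto simp: min_def mult_le_cancel_right1 mult_left_le_one_le)
      have "tau k * D \<le> tt * D" using le Dp by (simp add: mult_right_mono)
      then show "0 \<le> tau k \<and> tau k \<le> tp \<and> tau k * D \<le> (1 - sigma_c) * Nk" using ttD ge le2 by simp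
    qed
  qed
  have tau_all: "\<And>k. 0 \<le> tau k \<and> tau k \<le> (if k = 0 then tau_m1 else tau (k - 1))"
  proof -
    fix k show "0 \<le> tau k \<and> tau k \<le> (if k = 0 then tau_m1 else tau (k - 1))"
    proof (induction k)
      case 0 then show ?case using tau_step[of 0] init by simp
    next
      case (Suc k) then show ?case using tau_step[of "Suc k"] by simp
    qed
  qed
  have tau_nn: "\<And>k. 0 \<le> tau k" using tau_all by blast
  have tau_mono: "\<And>k. tau (Suc k) \<le> tau k" using tau_all by (metis diff_Suc_1 nat.distinct(1))
  have dq: "\<And>k. model_red f g r c J (x k) (alpha k) (v k + u k) (tau k)
             \<ge> sigma_c * (norm (c (x k)) - norm (c (x k) + J (x k) *v v k))"
  proof -
    fix k
    define D where "D = g (x k) \<bullet> (v k + u k) + (sigma_u + 1/2) * (norm (v k + u k))\<^sup>2 / alpha k + r (x k + (v k + u k)) - r (x k)"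
    define Nk where "Nk = norm (c (x k)) - norm (c (x k) + J (x k) *v v k)"
    have tD: "tau k * D \<le> (1 - sigma_c) * Nk"
      using tau_step[of k] tau_all[of k] tau_nn init unfolding D_def Nk_def by (cases k) auto
    have a0: "alpha k > 0" by (rule alpha_pos)
    have eq: "model_red f g r c J (x k) (alpha k) (v k + u k) (tau k)
       = - tau k * D + tau k * (sigma_u * (norm (v k + u k))\<^sup>2 / alpha k) + Nk"
      unfolding model_red_def D_def Nk_def Js using a0 by (simp add: field_simps)
    have "0 \<le> tau k * (sigma_u * (norm (v k + u k))\<^sup>2 / alpha k)"
      using tau_nn[of k] a0 p by simp
    then show "model_red f g r c J (x k) (alpha k) (v k + u k) (tau k) \<ge> sigma_c * Nk"
      using eq tD by (simp add: algebra_simps)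
  qed
  define C where "C = kappa_v * BJ * Bc + 2 * (Br + Bg)"
  have Cpos: "C > 0" using pos p by (simp add: C_def add_pos_nonneg)
  have JTc_ne: "\<And>k. k \<ge> k0 \<Longrightarrow> transpose (J (x k)) *v c (x k) \<noteq> 0"
    using k0 eps by (metis norm_zero not_le)
  have sb: "\<And>k. k \<ge> k0 \<Longrightarrow> norm (v k + u k) \<le> C * alpha k"
  proof -
    fix k assume kk: "k \<ge> k0"
    have a0: "alpha k > 0" by (rule alpha_pos)
    have "norm (transpose (J (x k)) *v c (x k)) \<le> norm (J (x k)) * norm (c (x k))" by (rule JTc_bound)
    also have "\<dots> \<le> BJ * Bc" using BJ[OF X(3)] Bc[OF X(3)] pos by (intro mult_mono) auto
    finally have jb: "norm (transpose (J (x k)) *v c (x k)) \<le> BJ * Bc" .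
    have "norm (v k) \<le> kappa_v * alpha k * norm (transpose (J (x k)) *v c (x k))"
      using step1_v[OF JTc_ne[OF kk]] by blast
    also have "\<dots> \<le> kappa_v * alpha k * (BJ * Bc)" using jb a0 p by (intro mult_left_mono) auto
    finally have vb: "norm (v k) \<le> kappa_v * BJ * Bc * alpha k" by (simp add: algebra_simps)
    have ub: "norm (u k) \<le> 2 * alpha k * (Br + Bg)"
    proof (rule u_bound[where Jm = "J (x k)" and G = "g (x k)" and p = "x k + v k" and r = r and X = X])
      show "J (x k) *v u k = 0" by (rule ju)
      show "\<forall>w. J (x k) *v w = 0 \<longrightarrow> g (x k) \<bullet> u k + 1 / (2 * alpha k) * (norm (u k))\<^sup>2 + r (x k + v k + u k)
               \<le> g (x k) \<bullet> w + 1 / (2 * alpha k) * (norm w)\<^sup>2 + r (x k + v k + w)"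
        using step2[of k] by blast
      show "x k + v k + u k \<in> X" using X(4)[of k] by (simp add: add.assoc)
    qed (use a0 X Bg[OF X(3)] pos rl in auto)
    have "norm (v k + u k) \<le> norm (v k) + norm (u k)" by (rule norm_triangle_ineq)
    also have "\<dots> \<le> C * alpha k" using vb ub by (simp add: C_def algebra_simps)
    finally show "norm (v k + u k) \<le> C * alpha k" .
  qed
  have Ndec: "\<And>k b. k \<ge> k0 \<Longrightarrow> 0 \<le> b \<Longrightarrow> b \<le> kappa_v * alpha k \<Longrightarrow> b * BJ\<^sup>2 \<le> 1 \<Longrightarrow>
      b * eps\<^sup>2 / (2 * Bc) \<le> norm (c (x k)) - norm (c (x k) + J (x k) *v v k)"
  proof -
    fix k b assume kk: "k \<ge> k0" and b: "0 \<le> b" "b \<le> kappa_v * alpha k" "b * BJ\<^sup>2 \<le> 1"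
    have b1: "(1/2) * (norm (c (x k) - beta k *\<^sub>R (J (x k) *v (transpose (J (x k)) *v c (x k)))))\<^sup>2
         \<le> (1/2) * (norm (c (x k) - b *\<^sub>R (J (x k) *v (transpose (J (x k)) *v c (x k)))))\<^sup>2"
      using step1_beta[OF JTc_ne[OF kk]] b by blast
    have "(norm (J (x k)))\<^sup>2 \<le> BJ\<^sup>2" using BJ[OF X(3)] by (intro power_mono) auto
    then have "b * (norm (J (x k)))\<^sup>2 \<le> b * BJ\<^sup>2" using b by (intro mult_left_mono) auto
    then have b2: "b * (norm (J (x k)))\<^sup>2 \<le> 1" using b by linarith
    have nd: "(norm (c (x k) + J (x k) *v v k))\<^sup>2 \<le> (norm (c (x k)))\<^sup>2 - b * (norm (transpose (J (x k)) *v c (x k)))\<^sup>2"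
      by (rule normal_dec[OF b1]) (use step1_v[OF JTc_ne[OF kk]] b b2 in auto)
    have "b * (norm (transpose (J (x k)) *v c (x k)))\<^sup>2 / (2 * Bc) \<le> norm (c (x k)) - norm (c (x k) + J (x k) *v v k)"
      by (rule N_bound[OF nd]) (use b Bc[OF X(3)] pos in auto)
    moreover have "b * eps\<^sup>2 \<le> b * (norm (transpose (J (x k)) *v c (x k)))\<^sup>2"
      using k0[OF kk] eps b by (intro mult_left_mono power_mono) auto
    ultimately show "b * eps\<^sup>2 / (2 * Bc) \<le> norm (c (x k)) - norm (c (x k) + J (x k) *v v k)"
      using pos by (meson divide_right_mono order_trans zero_le_numeral mult_nonneg_nonneg order_less_imp_le zero_less_one le_less_trans)
  qed
  define abar where "abar = min (1 / (2 * Lg)) (min (1 / (kappa_v * BJ\<^sup>2)) ((1 - eta) * sigma_c * kappa_v * eps\<^sup>2 / (2 * Bc * LJ * C\<^sup>2)))"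
  have abar_pos: "abar > 0" using pos p eps Cpos by (simp add: abar_def)
  have accept: "\<And>k. k \<ge> k0 \<Longrightarrow> alpha k \<le> abar \<Longrightarrow>
      merit (tau k) f r c (x k + (v k + u k))
        \<le> merit (tau k) f r c (x k) - eta * model_red f g r c J (x k) (alpha k) (v k + u k) (tau k)"
  proof -
    fix k assume kk: "k \<ge> k0" and ak: "alpha k \<le> abar"
    define s where "s = v k + u k"
    define a where "a = alpha k"
    define n where "n = norm s"
    define t where "t = tau k"
    define Nk where "Nk = norm (c (x k)) - norm (c (x k) + J (x k) *v v k)"
    define dqk where "dqk = model_red f g r c J (x k) (alpha k) (v k + u k) (tau k)"
    have a0: "a > 0" using alpha_pos by (simp add: a_def)
    have t0: "t \<ge> 0" using tau_nn by (simp add: t_def)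
    have ns: "n \<le> C * a" using sb[OF kk] by (simp add: n_def s_def a_def)
    have n0: "n \<ge> 0" by (simp add: n_def)
    have a1: "a \<le> 1 / (2 * Lg)" and a2: "a \<le> 1 / (kappa_v * BJ\<^sup>2)"
      and a3: "a \<le> (1 - eta) * sigma_c * kappa_v * eps\<^sup>2 / (2 * Bc * LJ * C\<^sup>2)"
      using ak by (auto simp: abar_def a_def)
    have ft: "f (x k + s) - f (x k) \<le> g (x k) \<bullet> s + Lg * n\<^sup>2"
      unfolding n_def by (rule f_taylor[OF f_deriv X(2) X(3)]) (use X(4) Lg pos in \<open>auto simp: s_def\<close>)
    have ct: "norm (c (x k + s) - c (x k) - J (x k) *v s) \<le> LJ * n\<^sup>2"
      unfolding n_def by (rule c_taylor[OF c_deriv X(2) X(3)]) (use X(4) LJ pos in \<open>auto simp: s_def\<close>)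
    have cn: "norm (c (x k + s)) \<le> norm (c (x k) + J (x k) *v v k) + LJ * n\<^sup>2"
    proof -
      have "c (x k + s) = (c (x k) + J (x k) *v v k) + (c (x k + s) - c (x k) - J (x k) *v s)"
        using Js[of k] by (simp add: s_def)
      then have "norm (c (x k + s)) \<le> norm (c (x k) + J (x k) *v v k) + norm (c (x k + s) - c (x k) - J (x k) *v s)"
        by (metis norm_triangle_ineq)
      then show ?thesis using ct by linarith
    qed
    have NB: "kappa_v * a * eps\<^sup>2 / (2 * Bc) \<le> Nk"
    proof -
      have "kappa_v * a * BJ\<^sup>2 \<le> 1" using a2 p pos by (simp add: le_divide_eq mult.commute mult.left_commute)
      then show ?thesis unfolding Nk_def a_def
        using Ndec[OF kk, of "kappa_v * alpha k"] p alpha_pos[of k] by (simp add: a_def)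
    qed
    have T1: "LJ * n\<^sup>2 \<le> (1 - eta) * sigma_c * Nk"
    proof -
      have "n\<^sup>2 \<le> (C * a)\<^sup>2" using ns n0 by (intro power_mono) auto
      then have "LJ * n\<^sup>2 \<le> LJ * (C * a)\<^sup>2" using pos by (intro mult_left_mono) auto
      also have "\<dots> = a * (LJ * C\<^sup>2 * a)" by (simp add: power2_eq_square algebra_simps)
      also have "LJ * C\<^sup>2 * a \<le> (1 - eta) * sigma_c * kappa_v * eps\<^sup>2 / (2 * Bc)"
      proof -
        have "LJ * C\<^sup>2 > 0" using pos Cpos by simp
        then have "LJ * C\<^sup>2 * a \<le> LJ * C\<^sup>2 * ((1 - eta) * sigma_c * kappa_v * eps\<^sup>2 / (2 * Bc * LJ * C\<^sup>2))"
          using a3 by (intro mult_left_mono) auto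
        also have "\<dots> = (1 - eta) * sigma_c * kappa_v * eps\<^sup>2 / (2 * Bc)"
          using pos Cpos by (simp add: field_simps)
        finally show ?thesis .
      qed
      then have "a * (LJ * C\<^sup>2 * a) \<le> a * ((1 - eta) * sigma_c * kappa_v * eps\<^sup>2 / (2 * Bc))"
        using a0 by (intro mult_left_mono) auto
      also have "\<dots> = (1 - eta) * sigma_c * (kappa_v * a * eps\<^sup>2 / (2 * Bc))" by (simp add: algebra_simps)
      also have "\<dots> \<le> (1 - eta) * sigma_c * Nk" using NB p by (intro mult_left_mono) auto
      finally show ?thesis .
    qed
    have T2: "t * n\<^sup>2 * Lg \<le> t * n\<^sup>2 * (1 / (2 * a))"
    proof -
      have "Lg \<le> 1 / (2 * a)" using a1 a0 pos by (simp add: field_simps)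
      then show ?thesis using t0 by (intro mult_left_mono) auto
    qed
    have dqN: "dqk \<ge> sigma_c * Nk" using dq[of k] by (simp add: dqk_def Nk_def)
    have T3: "dqk - eta * dqk \<ge> (1 - eta) * sigma_c * Nk"
    proof -
      have "(1 - eta) * (sigma_c * Nk) \<le> (1 - eta) * dqk" using dqN p by (intro mult_left_mono) auto
      then show ?thesis by (simp add: algebra_simps)
    qed
    have dqe: "dqk = - (t * (g (x k) \<bullet> s)) - t * n\<^sup>2 * (1 / (2 * a)) - t * r (x k + s) + t * r (x k)
                 + norm (c (x k)) - norm (c (x k) + J (x k) *v v k)"
      unfolding dqk_def model_red_def Js s_def[symmetric] n_def[symmetric] t_def[symmetric] a_def[symmetric]
      using Js[of k] by (simp add: algebra_simps s_def)
    have hf: "t * f (x k + s) \<le> t * f (x k) + t * (g (x k) \<bullet> s) + t * n\<^sup>2 * Lg"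
    proof -
      have "t * (f (x k + s) - f (x k)) \<le> t * (g (x k) \<bullet> s + Lg * n\<^sup>2)" using ft t0 by (intro mult_left_mono) auto
      then show ?thesis by (simp add: algebra_simps)
    qed
    have "merit t f r c (x k + s) \<le> merit t f r c (x k) - eta * dqk"
    proof -
      have e1: "t * (f (x k + s) + r (x k + s)) = t * f (x k + s) + t * r (x k + s)" by (simp add: algebra_simps)
      have e2: "t * (f (x k) + r (x k)) = t * f (x k) + t * r (x k)" by (simp add: algebra_simps)
      show ?thesis unfolding merit_def e1 e2 using hf cn T1 T2 T3 dqe by linarith
    qed
    then show "merit (tau k) f r c (x k + (v k + u k))
        \<le> merit (tau k) f r c (x k) - eta * model_red f g r c J (x k) (alpha k) (v k + u k) (tau k)"
      by (simp add: t_def s_def dqk_def)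
  qed
  have s4: "\<And>k. (merit (tau k) f r c (x k + (v k + u k))
            \<le> merit (tau k) f r c (x k) - eta * model_red f g r c J (x k) (alpha k) (v k + u k) (tau k)
       \<longrightarrow> x (Suc k) = x k + (v k + u k) \<and> alpha (Suc k) = alpha k) \<and>
       (\<not> merit (tau k) f r c (x k + (v k + u k))
            \<le> merit (tau k) f r c (x k) - eta * model_red f g r c J (x k) (alpha k) (v k + u k) (tau k)
       \<longrightarrow> x (Suc k) = x k \<and> alpha (Suc k) = xi * alpha k)"
    using if_split_fact[OF step4[unfolded Let_def]] .
  define amin where "amin = min (alpha k0) (xi * abar)"
  have amin_pos: "amin > 0" using alpha_pos[of k0] abar_pos p by (simp add: amin_def)
  have alow0: "\<And>n. alpha (k0 + n) \<ge> amin"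
  proof -
    fix n show "alpha (k0 + n) \<ge> amin"
    proof (induction n)
      case 0 then show ?case by (simp add: amin_def)
    next
      case (Suc n)
      define k where "k = k0 + n"
      have kk: "k \<ge> k0" by (simp add: k_def)
      have IH: "alpha k \<ge> amin" using Suc by (simp add: k_def)
      have "alpha (Suc k) \<ge> amin"
      proof (cases "alpha k \<le> abar")
        case True
        then have "alpha (Suc k) = alpha k" using s4[of k] accept[OF kk True] by blast
        then show ?thesis using IH by simp
      next
        case False
        have "xi * abar \<le> xi * alpha k" using False p by (intro mult_left_mono) auto
        moreover have "xi * alpha k \<le> alpha k" using p alpha_pos[of k] by (simp add: mult_le_cancel_right1)
        moreover have "alpha (Suc k) = alpha k \<or> alpha (Suc k) = xi * alpha k" using s4[of k] by blast
        ultimately show ?thesis by (auto simp: amin_def)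
      qed
      then show ?case by (simp add: k_def)
    qed
  qed
  have alow: "\<And>k. k \<ge> k0 \<Longrightarrow> alpha k \<ge> amin"
    using alow0 by (metis le_add_diff_inverse)
  define b0 where "b0 = min (kappa_v * amin) (1 / BJ\<^sup>2)"
  define delta where "delta = sigma_c * (b0 * eps\<^sup>2 / (2 * Bc))"
  have b0pos: "b0 > 0" using p amin_pos pos by (simp add: b0_def)
  have delta_pos: "delta > 0" using b0pos p eps pos by (simp add: delta_def)
  have dqd: "\<And>k. k \<ge> k0 \<Longrightarrow> model_red f g r c J (x k) (alpha k) (v k + u k) (tau k) \<ge> delta"
  proof -
    fix k assume kk: "k \<ge> k0"
    have "b0 \<le> kappa_v * amin" by (simp add: b0_def)
    also have "\<dots> \<le> kappa_v * alpha k" using alow[OF kk] p by (intro mult_left_mono) auto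
    finally have b1: "b0 \<le> kappa_v * alpha k" .
    have "b0 * BJ\<^sup>2 \<le> (1 / BJ\<^sup>2) * BJ\<^sup>2" by (intro mult_right_mono) (auto simp: b0_def)
    then have b2: "b0 * BJ\<^sup>2 \<le> 1" using pos by simp
    have "b0 * eps\<^sup>2 / (2 * Bc) \<le> norm (c (x k)) - norm (c (x k) + J (x k) *v v k)"
      by (rule Ndec[OF kk]) (use b0pos b1 b2 in auto)
    then have "delta \<le> sigma_c * (norm (c (x k)) - norm (c (x k) + J (x k) *v v k))"
      unfolding delta_def using p by (intro mult_left_mono) auto
    then show "model_red f g r c J (x k) (alpha k) (v k + u k) (tau k) \<ge> delta" using dq[of k] by linarith
  qed
  define Psi where "Psi k = tau k * (f (x k) + r (x k) - flow) + norm (c (x k))" for k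
  have Fnn: "\<And>k. f (x k) + r (x k) - flow \<ge> 0" using flow[OF X(3)] r_nonneg by (smt (verit))
  have Psi0: "\<And>k. Psi k \<ge> 0" unfolding Psi_def using tau_nn Fnn by (simp add: add_nonneg_nonneg)
  have PA: "\<And>k. k \<ge> k0 \<Longrightarrow> merit (tau k) f r c (x k + (v k + u k))
            \<le> merit (tau k) f r c (x k) - eta * model_red f g r c J (x k) (alpha k) (v k + u k) (tau k) \<Longrightarrow>
         Psi (Suc k) \<le> Psi k - eta * delta \<and> alpha (Suc k) = alpha k"
  proof -
    fix k assume kk: "k \<ge> k0" and T: "merit (tau k) f r c (x k + (v k + u k))
            \<le> merit (tau k) f r c (x k) - eta * model_red f g r c J (x k) (alpha k) (v k + u k) (tau k)"
    have xs: "x (Suc k) = x k + (v k + u k)" and as: "alpha (Suc k) = alpha k" using s4[of k] T by auto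
    have "Psi (Suc k) \<le> tau k * (f (x (Suc k)) + r (x (Suc k)) - flow) + norm (c (x (Suc k)))"
      unfolding Psi_def using tau_mono[of k] Fnn[of "Suc k"] by (simp add: mult_right_mono)
    also have "\<dots> = merit (tau k) f r c (x k + (v k + u k)) - tau k * flow"
      by (simp add: merit_def xs algebra_simps)
    also have "\<dots> \<le> merit (tau k) f r c (x k) - eta * model_red f g r c J (x k) (alpha k) (v k + u k) (tau k) - tau k * flow"
      using T by simp
    also have "\<dots> = Psi k - eta * model_red f g r c J (x k) (alpha k) (v k + u k) (tau k)"
      by (simp add: merit_def Psi_def algebra_simps)
    also have "\<dots> \<le> Psi k - eta * delta" using dqd[OF kk] p by (simp add: mult_left_mono)
    finally show "Psi (Suc k) \<le> Psi k - eta * delta \<and> alpha (Suc k) = alpha k" using as by simp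
  qed
  have PR: "\<And>k. \<not> merit (tau k) f r c (x k + (v k + u k))
            \<le> merit (tau k) f r c (x k) - eta * model_red f g r c J (x k) (alpha k) (v k + u k) (tau k) \<Longrightarrow>
         Psi (Suc k) \<le> Psi k \<and> alpha (Suc k) = xi * alpha k"
  proof -
    fix k assume T: "\<not> merit (tau k) f r c (x k + (v k + u k))
            \<le> merit (tau k) f r c (x k) - eta * model_red f g r c J (x k) (alpha k) (v k + u k) (tau k)"
    have xs: "x (Suc k) = x k" and as: "alpha (Suc k) = xi * alpha k" using s4[of k] T by auto
    have "Psi (Suc k) \<le> Psi k"
      unfolding Psi_def xs using tau_mono[of k] Fnn[of k] by (simp add: mult_right_mono)
    then show "Psi (Suc k) \<le> Psi k \<and> alpha (Suc k) = xi * alpha k" using as by simp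
  qed
  define Lx where "Lx = ln (1 / xi)"
  have Lx_pos: "Lx > 0" using p by (simp add: Lx_def)
  have lnxi: "ln xi = - Lx" using p by (simp add: Lx_def ln_div)
  define M where "M k = Psi k / (eta * delta) + ln (alpha k) / Lx" for k
  have ed: "eta * delta > 0" using p delta_pos by simp
  have Mstep: "\<And>k. k \<ge> k0 \<Longrightarrow> M (Suc k) \<le> M k - 1"
  proof -
    fix k assume kk: "k \<ge> k0"
    show "M (Suc k) \<le> M k - 1"
    proof (cases "merit (tau k) f r c (x k + (v k + u k))
            \<le> merit (tau k) f r c (x k) - eta * model_red f g r c J (x k) (alpha k) (v k + u k) (tau k)")
      case True
      from PA[OF kk True] have h: "Psi (Suc k) \<le> Psi k - eta * delta" "alpha (Suc k) = alpha k" by auto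
      have "Psi (Suc k) / (eta * delta) \<le> (Psi k - eta * delta) / (eta * delta)"
        using h(1) ed by (simp add: divide_right_mono)
      also have "\<dots> = Psi k / (eta * delta) - 1" using p delta_pos by (simp add: diff_divide_distrib)
      finally show ?thesis unfolding M_def h(2) by simp
    next
      case False
      from PR[OF False] have h: "Psi (Suc k) \<le> Psi k" "alpha (Suc k) = xi * alpha k" by auto
      have "Psi (Suc k) / (eta * delta) \<le> Psi k / (eta * delta)"
        using h(1) ed by (simp add: divide_right_mono)
      moreover have "ln (alpha (Suc k)) / Lx = ln (alpha k) / Lx - 1"
        using h(2) p alpha_pos[of k] Lx_pos by (simp add: ln_mult lnxi diff_divide_distrib)
      ultimately show ?thesis unfolding M_def by simp
    qed
  qed
  have Mind: "\<And>n. M (k0 + n) \<le> M k0 - real n"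
  proof -
    fix n show "M (k0 + n) \<le> M k0 - real n"
    proof (induction n)
      case 0 then show ?case by simp
    next
      case (Suc n)
      have "M (Suc (k0 + n)) \<le> M (k0 + n) - 1" by (rule Mstep) simp
      then show ?case using Suc by simp
    qed
  qed
  have Mlow: "\<And>k. k \<ge> k0 \<Longrightarrow> M k \<ge> ln amin / Lx"
  proof -
    fix k assume kk: "k \<ge> k0"
    have "ln amin \<le> ln (alpha k)" using alow[OF kk] amin_pos by simp
    then have "ln amin / Lx \<le> ln (alpha k) / Lx" using Lx_pos by (simp add: divide_right_mono)
    moreover have "0 \<le> Psi k / (eta * delta)" using Psi0[of k] ed by simp
    ultimately show "M k \<ge> ln amin / Lx" unfolding M_def by linarith
  qed
  obtain n :: nat where n: "real n > M k0 - ln amin / Lx" using reals_Archimedean2 by blast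
  have "M (k0 + n) \<ge> ln amin / Lx" by (rule Mlow) simp
  with Mind[of n] n show False by linarith
qed

end
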